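(* Let $S=(P,L)$ be a slim dense near hexagon, let $Q_1,Q_2$ be two disjoint big quads of $S$, and let $Y$ be the subspace of $S$ generated by $Q_1\cup Q_2$. For $\{i,j\}=\{1,2\}$ and $x\in P\setminus Y$, let $x^{j}$ denote the unique point of $Q_j$ at distance $1$ from $x$, and for $y\in Q_i$ let $z_y$ denote the unique point of $Q_j$ at distance $1$ from $y$. Then for every $x\in P\setminus Y$ and $\{i,j\}=\{1,2\}$ we have $d(z_{x^{i}},x^{j})=1$ and $d(z_{x^{1}},z_{x^{2}})=d(x^{1},x^{2})=2$; that is, $x^{1},z_{x^{1}},x^{2},z_{x^{2}}$ form a quadrangle in the collinearity graph.
   Context: A slim partial linear space has exactly $3$ points per line; $d$ is the distance in the collinearity graph. A near hexagon is a connected partial linear space of diameter $3$ with no point collinear with all others such that every point $x$ has a unique nearest point on every line. A quad is a convex subset of diameter $2$ (containing all shortest paths between its points) in which no point is collinear with all others; the near hexagon is dense if any two points at distance $2$ lie in a quad. A quad $Q$ is big if every point of $S$ has distance at most $1$ from $Q$ (and then a point outside $Q$ has a unique nearest point in $Q$). A subspace is a set of points containing every line meeting it in at least two points; the subspace generated by a set is the intersection of all subspaces containing it. *)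

theory Defs
  imports Main
begin

definition partial_linear_space :: "'a set \<Rightarrow> 'a set set \<Rightarrow> bool" where
  "partial_linear_space P L \<longleftrightarrow>
     (\<forall>l\<in>L. l \<subseteq> P \<and> finite l \<and> card l \<ge> 2) \<and>
     (\<forall>x\<in>P. \<forall>y\<in>P. x \<noteq> y \<longrightarrow> (\<forall>l\<in>L. \<forall>m\<in>L. x \<in> l \<and> y \<in> l \<and> x \<in> m \<and> y \<in> m \<longrightarrow> l = m))"

definition slim :: "'a set set \<Rightarrow> bool" where
  "slim L \<longleftrightarrow> (\<forall>l\<in>L. finite l \<and> card l = 3)"

definition coll :: "'a set set \<Rightarrow> 'a \<Rightarrow> 'a \<Rightarrow> bool" where
  "coll L x y \<longleftrightarrow> x \<noteq> y \<and> (\<exists>l\<in>L. x \<in> l \<and> y \<in> l)"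

definition walk :: "'a set set \<Rightarrow> 'a list \<Rightarrow> bool" where
  "walk L ps \<longleftrightarrow> ps \<noteq> [] \<and> (\<forall>i. Suc i < length ps \<longrightarrow> coll L (ps ! i) (ps ! Suc i))"

definition walk_from_to :: "'a set set \<Rightarrow> 'a list \<Rightarrow> 'a \<Rightarrow> 'a \<Rightarrow> bool" where
  "walk_from_to L ps x y \<longleftrightarrow> walk L ps \<and> hd ps = x \<and> last ps = y"

definition dist :: "'a set set \<Rightarrow> 'a \<Rightarrow> 'a \<Rightarrow> nat" where
  "dist L x y = (LEAST n. \<exists>ps. walk_from_to L ps x y \<and> length ps = Suc n)"

definition connected_geom :: "'a set \<Rightarrow> 'a set set \<Rightarrow> bool" where
  "connected_geom P L \<longleftrightarrow> (\<forall>x\<in>P. \<forall>y\<in>P. \<exists>ps. walk_from_to L ps x y)"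

definition near_hexagon :: "'a set \<Rightarrow> 'a set set \<Rightarrow> bool" where
  "near_hexagon P L \<longleftrightarrow>
     partial_linear_space P L \<and> connected_geom P L \<and>
     (\<forall>x\<in>P. \<forall>y\<in>P. dist L x y \<le> 3) \<and> (\<exists>x\<in>P. \<exists>y\<in>P. dist L x y = 3) \<and>
     (\<forall>x\<in>P. \<exists>y\<in>P. y \<noteq> x \<and> \<not> coll L x y) \<and>
     (\<forall>x\<in>P. \<forall>l\<in>L. \<exists>!y. y \<in> l \<and> (\<forall>z\<in>l. z \<noteq> y \<longrightarrow> dist L x y < dist L x z))"

definition convex_set :: "'a set set \<Rightarrow> 'a set \<Rightarrow> bool" where
  "convex_set L X \<longleftrightarrow> (\<forall>x\<in>X. \<forall>y\<in>X. \<forall>ps.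
      walk_from_to L ps x y \<and> length ps = Suc (dist L x y) \<longrightarrow> set ps \<subseteq> X)"

definition quad :: "'a set \<Rightarrow> 'a set set \<Rightarrow> 'a set \<Rightarrow> bool" where
  "quad P L Q \<longleftrightarrow> Q \<subseteq> P \<and> convex_set L Q \<and>
     (\<forall>x\<in>Q. \<forall>y\<in>Q. dist L x y \<le> 2) \<and> (\<exists>x\<in>Q. \<exists>y\<in>Q. dist L x y = 2) \<and>
     (\<forall>x\<in>Q. \<exists>y\<in>Q. y \<noteq> x \<and> \<not> coll L x y)"

definition dense :: "'a set \<Rightarrow> 'a set set \<Rightarrow> bool" where
  "dense P L \<longleftrightarrow> (\<forall>x\<in>P. \<forall>y\<in>P. dist L x y = 2 \<longrightarrow> (\<exists>Q. quad P L Q \<and> x \<in> Q \<and> y \<in> Q))"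

definition big_quad :: "'a set \<Rightarrow> 'a set set \<Rightarrow> 'a set \<Rightarrow> bool" where
  "big_quad P L Q \<longleftrightarrow> quad P L Q \<and> (\<forall>x\<in>P. \<exists>q\<in>Q. dist L x q \<le> 1)"

definition subspace :: "'a set \<Rightarrow> 'a set set \<Rightarrow> 'a set \<Rightarrow> bool" where
  "subspace P L X \<longleftrightarrow> X \<subseteq> P \<and> (\<forall>l\<in>L. card (l \<inter> X) \<ge> 2 \<longrightarrow> l \<subseteq> X)"

definition generated_subspace :: "'a set \<Rightarrow> 'a set set \<Rightarrow> 'a set \<Rightarrow> 'a set" where
  "generated_subspace P L A = \<Inter>{X. subspace P L X \<and> A \<subseteq> X}"

definition proj1 :: "'a set set \<Rightarrow> 'a set \<Rightarrow> 'a \<Rightarrow> 'a" where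
  "proj1 L Q x = (THE q. q \<in> Q \<and> dist L x q = 1)"

end

theory Submission
  imports Defs
begin

lemma wft_single: "walk_from_to L [x] x x"
  by (simp add: walk_from_to_def walk_def)

lemma dist_self: "dist L x x = 0"
  unfolding dist_def using wft_single[of L x] by (intro Least_eq_0) auto

lemma dist_le: "walk_from_to L ps x y \<Longrightarrow> dist L x y \<le> length ps - 1"
  unfolding dist_def
  by (rule Least_le) (auto simp: walk_from_to_def walk_def)

lemma dist_walk: "walk_from_to L ps x y \<Longrightarrow>
    \<exists>qs. walk_from_to L qs x y \<and> length qs = Suc (dist L x y)"
  unfolding dist_def
  by (rule LeastI_ex[where P="\<lambda>n. \<exists>qs. walk_from_to L qs x y \<and> length qs = Suc n"])
     (rule exI[of _ "length ps - 1"], auto simp: walk_from_to_def walk_def)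

lemma dist0: "walk_from_to L ps x y \<Longrightarrow> dist L x y = 0 \<Longrightarrow> x = y"
  using dist_walk[of L ps x y]
  by (auto simp: walk_from_to_def walk_def length_Suc_conv)

lemma dist1: "walk_from_to L ps x y \<Longrightarrow> dist L x y = 1 \<Longrightarrow> coll L x y"
proof -
  assume a: "walk_from_to L ps x y" "dist L x y = 1"
  then obtain qs where q: "walk_from_to L qs x y" "length qs = 2"
    using dist_walk[of L ps x y] by auto
  then obtain u v where "qs = [u, v]"
    by (auto simp: length_Suc_conv numeral_2_eq_2)
  with q show ?thesis by (auto simp: walk_from_to_def walk_def)
qed

lemma walk2: "coll L a b \<Longrightarrow> walk_from_to L [a, b] a b"
  by (auto simp: walk_from_to_def walk_def)

lemma walk3: "coll L a b \<Longrightarrow> coll L b c \<Longrightarrow> walk_from_to L [a, b, c] a c"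
  by (auto simp: walk_from_to_def walk_def less_Suc_eq nth_Cons split: nat.split)

lemma coll_dist: "coll L x y \<Longrightarrow> dist L x y = 1"
proof -
  assume c: "coll L x y"
  have "dist L x y \<le> 1" using dist_le[OF walk2[OF c]] by simp
  moreover have "dist L x y \<noteq> 0" using dist0[OF walk2[OF c]] c by (auto simp: coll_def)
  ultimately show ?thesis by simp
qed

lemma dist_le2: "coll L a b \<Longrightarrow> coll L b c \<Longrightarrow> dist L a c \<le> 2"
  using dist_le[OF walk3] by fastforce

lemma coll_sym: "coll L a b \<Longrightarrow> coll L b a"
  by (auto simp: coll_def)

lemma coll_line: "l \<in> L \<Longrightarrow> a \<in> l \<Longrightarrow> b \<in> l \<Longrightarrow> a \<noteq> b \<Longrightarrow> coll L a b"
  by (auto simp: coll_def)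

lemma coll_P: "partial_linear_space P L \<Longrightarrow> coll L a b \<Longrightarrow> a \<in> P \<and> b \<in> P"
  by (auto simp: coll_def partial_linear_space_def)

lemma coll_ex_line: "coll L a b \<Longrightarrow> \<exists>l\<in>L. a \<in> l \<and> b \<in> l"
  by (auto simp: coll_def)

lemma nh_facts:
  assumes "near_hexagon P L"
  shows "partial_linear_space P L" "connected_geom P L"
    "\<And>p l. p \<in> P \<Longrightarrow> l \<in> L \<Longrightarrow> \<exists>!y. y \<in> l \<and> (\<forall>z\<in>l. z \<noteq> y \<longrightarrow> dist L p y < dist L p z)"
  using assms by (auto simp: near_hexagon_def)

lemma conn_walk: "connected_geom P L \<Longrightarrow> a \<in> P \<Longrightarrow> b \<in> P \<Longrightarrow> \<exists>ps. walk_from_to L ps a b"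
  by (auto simp: connected_geom_def)

lemma dist0P: "connected_geom P L \<Longrightarrow> a \<in> P \<Longrightarrow> b \<in> P \<Longrightarrow> dist L a b = 0 \<Longrightarrow> a = b"
  using conn_walk dist0 by metis

lemma dist1P: "connected_geom P L \<Longrightarrow> a \<in> P \<Longrightarrow> b \<in> P \<Longrightarrow> dist L a b = 1 \<Longrightarrow> coll L a b"
  using conn_walk dist1 by metis

lemma line_P: "partial_linear_space P L \<Longrightarrow> l \<in> L \<Longrightarrow> l \<subseteq> P"
  by (auto simp: partial_linear_space_def)

lemma nearest2:
  assumes NH: "near_hexagon P L" and z: "z \<in> P" and l: "l \<in> L" "a \<in> l" "b \<in> l" "a \<noteq> b"
    and da: "dist L z a = k" and db: "dist L z b = k"
  shows "\<exists>y\<in>l. y \<noteq> a \<and> y \<noteq> b \<and> dist L z y < k"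
proof -
  obtain y where y: "y \<in> l" "\<forall>w\<in>l. w \<noteq> y \<longrightarrow> dist L z y < dist L z w"
    using nh_facts(3)[OF NH z l(1)] by blast
  have "y \<noteq> a" using y l da db by force
  moreover have "y \<noteq> b" using y l da db by force
  ultimately show ?thesis using y l da by force
qed

lemma triangle:
  assumes NH: "near_hexagon P L" and l: "l \<in> L" "a \<in> l" "b \<in> l" "a \<noteq> b"
    and c: "coll L c a" "coll L c b"
  shows "c \<in> l"
proof -
  have PL: "partial_linear_space P L" and C: "connected_geom P L" using nh_facts[OF NH] by auto
  have cP: "c \<in> P" using coll_P[OF PL c(1)] by auto
  obtain y where y: "y \<in> l" "y \<noteq> a" "y \<noteq> b" "dist L c y < 1"
    using nearest2[OF NH cP l coll_dist[OF c(1)] coll_dist[OF c(2)]] by blast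
  have "y \<in> P" using y line_P[OF PL l(1)] by auto
  then have "c = y" using dist0P[OF C cP] y by auto
  with y show ?thesis by simp
qed

lemma gen_sub:
  assumes PL: "partial_linear_space P L" and l: "l \<in> L" "a \<in> l" "b \<in> l" "a \<noteq> b"
    and ab: "a \<in> generated_subspace P L A" "b \<in> generated_subspace P L A"
  shows "l \<subseteq> generated_subspace P L A"
  unfolding generated_subspace_def
proof (rule Inter_greatest)
  fix X assume "X \<in> {X. subspace P L X \<and> A \<subseteq> X}"
  then have X: "subspace P L X" "A \<subseteq> X" by auto
  have "a \<in> X" "b \<in> X" using ab X unfolding generated_subspace_def by auto
  have fl: "finite l" using PL l by (auto simp: partial_linear_space_def)
  have "{a, b} \<subseteq> l \<inter> X" using \<open>a \<in> X\<close> \<open>b \<in> X\<close> l by auto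
  then have "card {a, b} \<le> card (l \<inter> X)" using fl by (intro card_mono) auto
  then have "card (l \<inter> X) \<ge> 2" using l by simp
  then show "l \<subseteq> X" using X l unfolding subspace_def by auto
qed

lemma gen_sup: "A \<subseteq> generated_subspace P L A"
  by (auto simp: generated_subspace_def)

lemma convex_mid:
  assumes "quad P L Q" "a \<in> Q" "c \<in> Q" "dist L a c = 2" "coll L a b" "coll L b c"
  shows "b \<in> Q"
  using assms walk3[OF assms(5,6)] unfolding quad_def convex_set_def by fastforce

lemma quad_diam: "quad P L Q \<Longrightarrow> a \<in> Q \<Longrightarrow> b \<in> Q \<Longrightarrow> dist L a b \<le> 2"
  by (auto simp: quad_def)

lemma quad_P: "quad P L Q \<Longrightarrow> Q \<subseteq> P"
  by (auto simp: quad_def)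

lemma dist_cases2:
  assumes "connected_geom P L" "a \<in> P" "b \<in> P" "a \<noteq> b" "dist L a b \<le> 2"
  shows "coll L a b \<or> dist L a b = 2"
proof -
  have "dist L a b \<noteq> 0" using dist0P[OF assms(1-3)] assms(4) by auto
  then have "dist L a b = 1 \<or> dist L a b = 2" using assms(5) by linarith
  then show ?thesis using dist1P[OF assms(1-3)] by auto
qed

lemma proj_x:
  assumes NH: "near_hexagon P L" and Q: "quad P L Q" and big: "\<forall>p\<in>P. \<exists>q\<in>Q. dist L p q \<le> 1"
    and QY: "Q \<subseteq> Y"
    and YsubA: "\<forall>l\<in>L. \<forall>a b. a \<in> l \<longrightarrow> b \<in> l \<longrightarrow> a \<noteq> b \<longrightarrow> a \<in> Y \<longrightarrow> b \<in> Y \<longrightarrow> l \<subseteq> Y"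
    and x: "x \<in> P" "x \<notin> Y"
  shows "\<exists>q. q \<in> Q \<and> coll L x q \<and> (\<forall>q'. q' \<in> Q \<and> coll L x q' \<longrightarrow> q' = q)"
proof -
  have Ysub: "l \<subseteq> Y" if "l \<in> L" "a \<in> l" "b \<in> l" "a \<noteq> b" "a \<in> Y" "b \<in> Y" for l a b
    using YsubA that by blast
  have PL: "partial_linear_space P L" and C: "connected_geom P L" using nh_facts[OF NH] by auto
  have QP: "Q \<subseteq> P" using quad_P[OF Q] .
  obtain q where q: "q \<in> Q" "dist L x q \<le> 1" using big x by auto
  have "x \<noteq> q" using q x QY by auto
  then have "dist L x q \<noteq> 0" using dist0P[OF C x(1)] q QP by auto
  then have cq: "coll L x q" using dist1P[OF C x(1)] q QP by auto
  have "q' = q" if q': "q' \<in> Q" "coll L x q'" for q'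
  proof (rule ccontr)
    assume ne: "q' \<noteq> q"
    have "coll L q q' \<or> dist L q q' = 2"
      using dist_cases2[OF C _ _ ne[symmetric]] q q' QP quad_diam[OF Q] by auto
    then show False
    proof
      assume "coll L q q'"
      then obtain l where l: "l \<in> L" "q \<in> l" "q' \<in> l" using coll_ex_line by metis
      have "x \<in> l" using triangle[OF NH l ne[symmetric] cq q'(2)] .
      then show False using Ysub[OF l ne[symmetric]] q q' QY x by auto
    next
      assume "dist L q q' = 2"
      then have "x \<in> Q" using convex_mid[OF Q q(1) q'(1) _ coll_sym[OF cq] q'(2)] by auto
      then show False using x QY by auto
    qed
  qed
  then show ?thesis using q cq by blast
qed

lemma proj_eq:
  assumes C: "connected_geom P L" and QP: "Q \<subseteq> P" and p: "p \<in> P"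
    and q: "q \<in> Q" "coll L p q" and u: "\<forall>q'. q' \<in> Q \<and> coll L p q' \<longrightarrow> q' = q"
  shows "proj1 L Q p = q"
  unfolding proj1_def
proof (rule the_equality)
  show "q \<in> Q \<and> dist L p q = 1" using q coll_dist by auto
  fix q' assume "q' \<in> Q \<and> dist L p q' = 1"
  then show "q' = q" using u dist1P[OF C p] QP by auto
qed

lemma key:
  assumes NH: "near_hexagon P L" and Qa: "quad P L Qa" and Qb: "quad P L Qb"
    and bigA: "\<forall>p\<in>P. \<exists>q\<in>Qa. dist L p q \<le> 1"
    and bigB: "\<forall>p\<in>P. \<exists>q\<in>Qb. dist L p q \<le> 1"
    and disj: "Qa \<inter> Qb = {}"
    and QaY: "Qa \<subseteq> Y" and QbY: "Qb \<subseteq> Y"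
    and YsubA: "\<forall>l\<in>L. \<forall>a b. a \<in> l \<longrightarrow> b \<in> l \<longrightarrow> a \<noteq> b \<longrightarrow> a \<in> Y \<longrightarrow> b \<in> Y \<longrightarrow> l \<subseteq> Y"
    and x: "x \<in> P" "x \<notin> Y"
  shows "proj1 L Qa x \<in> Qa \<and> proj1 L Qb x \<in> Qb \<and> proj1 L Qb (proj1 L Qa x) \<in> Qb
     \<and> coll L (proj1 L Qb (proj1 L Qa x)) (proj1 L Qa x)
     \<and> coll L (proj1 L Qb (proj1 L Qa x)) (proj1 L Qb x)
     \<and> \<not> coll L (proj1 L Qa x) (proj1 L Qb x)
     \<and> dist L (proj1 L Qa x) (proj1 L Qb x) = 2"
proof -
  have Ysub: "l \<subseteq> Y" if "l \<in> L" "a \<in> l" "b \<in> l" "a \<noteq> b" "a \<in> Y" "b \<in> Y" for l a b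
    using YsubA that by blast
  have PL: "partial_linear_space P L" and C: "connected_geom P L" using nh_facts[OF NH] by auto
  have QaP: "Qa \<subseteq> P" using quad_P[OF Qa] .
  have QbP: "Qb \<subseteq> P" using quad_P[OF Qb] .
  obtain x1 where x1: "x1 \<in> Qa" "coll L x x1" and u1: "\<forall>q'. q' \<in> Qa \<and> coll L x q' \<longrightarrow> q' = x1"
    using proj_x[OF NH Qa bigA QaY YsubA x] by blast
  obtain x2 where x2: "x2 \<in> Qb" "coll L x x2" and u2: "\<forall>q'. q' \<in> Qb \<and> coll L x q' \<longrightarrow> q' = x2"
    using proj_x[OF NH Qb bigB QbY YsubA x] by blast
  have px1: "proj1 L Qa x = x1" using proj_eq[OF C QaP x(1) x1 u1] .
  have px2: "proj1 L Qb x = x2" using proj_eq[OF C QbP x(1) x2 u2] .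
  have x1P: "x1 \<in> P" and x2P: "x2 \<in> P" using x1 x2 QaP QbP by auto
  have ne12: "x1 \<noteq> x2" using x1 x2 disj by auto
  have nc12: "\<not> coll L x1 x2"
  proof
    assume "coll L x1 x2"
    then obtain l where l: "l \<in> L" "x1 \<in> l" "x2 \<in> l" using coll_ex_line by metis
    have "x \<in> l" using triangle[OF NH l ne12 x1(2) x2(2)] .
    then show False using Ysub[OF l ne12] x1 x2 QaY QbY x by auto
  qed
  have d12: "dist L x1 x2 = 2"
    using dist_cases2[OF C x1P x2P ne12 dist_le2[OF coll_sym[OF x1(2)] x2(2)]] nc12 by auto
  have step3: "coll L z x2" if z: "z \<in> Qb" "coll L x1 z" for z
  proof (rule ccontr)
    assume nc: "\<not> coll L z x2"
    have zP: "z \<in> P" using z QbP by auto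
    have zx2: "z \<noteq> x2" using z nc12 by auto
    have dz2: "dist L z x2 = 2"
      using dist_cases2[OF C zP x2P zx2 quad_diam[OF Qb z(1) x2(1)]] nc by auto
    have zx: "z \<noteq> x" using z x QbY by auto
    have nczx: "\<not> coll L z x" using u2 z zx2 coll_sym by metis
    have dzx: "dist L z x = 2"
      using dist_cases2[OF C zP x(1) zx dist_le2[OF coll_sym[OF z(2)] coll_sym[OF x1(2)]]] nczx by auto
    obtain l where l: "l \<in> L" "x \<in> l" "x2 \<in> l" using coll_ex_line[OF x2(2)] by metis
    have xx2: "x \<noteq> x2" using x x2 QbY by auto
    obtain y where y: "y \<in> l" "y \<noteq> x" "y \<noteq> x2" "dist L z y < 2"
      using nearest2[OF NH zP l xx2 dzx dz2] by blast
    have yP: "y \<in> P" using y line_P[OF PL l(1)] by auto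
    have "z \<noteq> y"
    proof
      assume "z = y"
      then have "coll L z x" using coll_line[OF l(1) y(1) l(2)] y by auto
      then show False using nczx by simp
    qed
    then have "dist L z y \<noteq> 0" using dist0P[OF C zP yP] by auto
    then have czy: "coll L z y" using dist1P[OF C zP yP] y by auto
    have cy2: "coll L y x2" using coll_line[OF l(1) y(1) l(3) y(3)] .
    have "y \<in> Qb" using convex_mid[OF Qb z(1) x2(1) dz2 czy cy2] .
    then have "l \<subseteq> Y" using Ysub[OF l(1) y(1) l(3) y(3)] x2 QbY by auto
    then show False using l x by auto
  qed
  have "\<exists>z. z \<in> Qb \<and> coll L x1 z"
  proof -
    obtain q where q: "q \<in> Qb" "dist L x1 q \<le> 1" using bigB x1P by auto
    have qP: "q \<in> P" using q QbP by auto
    have "x1 \<noteq> q" using q x1 disj by auto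
    then have "dist L x1 q \<noteq> 0" using dist0P[OF C x1P qP] by auto
    then have "coll L x1 q" using dist1P[OF C x1P qP] q by auto
    then show ?thesis using q by auto
  qed
  then obtain z1 where z1: "z1 \<in> Qb" "coll L x1 z1" by blast
  have uz: "z' = z1" if z': "z' \<in> Qb" "coll L x1 z'" for z'
  proof (rule ccontr)
    assume ne: "z' \<noteq> z1"
    have c1: "coll L z1 x2" using step3 z1 by auto
    have c2: "coll L z' x2" using step3 z' by auto
    have "coll L z1 z' \<or> dist L z1 z' = 2"
      using dist_cases2[OF C _ _ ne[symmetric]] z1 z' QbP quad_diam[OF Qb] by auto
    then show False
    proof
      assume "coll L z1 z'"
      then obtain l where l: "l \<in> L" "z1 \<in> l" "z' \<in> l" using coll_ex_line by metis
      have "x1 \<in> l" using triangle[OF NH l ne[symmetric] z1(2) z'(2)] .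
      moreover have "x2 \<in> l" using triangle[OF NH l ne[symmetric] coll_sym[OF c1] coll_sym[OF c2]] .
      ultimately show False using coll_line[OF l(1) _ _ ne12] nc12 by auto
    next
      assume "dist L z1 z' = 2"
      then have "x1 \<in> Qb" using convex_mid[OF Qb z1(1) z'(1) _ coll_sym[OF z1(2)] z'(2)] by auto
      then show False using x1 disj by auto
    qed
  qed
  have pz1: "proj1 L Qb x1 = z1" using proj_eq[OF C QbP x1P z1] uz by blast
  show ?thesis using px1 px2 pz1 x1 x2 z1 step3[OF z1] coll_sym[OF z1(2)] nc12 d12 by auto
qed

theorem proposition2p3:
  fixes P :: "'a set" and L :: "'a set set" and Q1 Q2 :: "'a set" and x :: 'a
  assumes "near_hexagon P L" and "slim L" and "dense P L"
    and "big_quad P L Q1" and "big_quad P L Q2" and "Q1 \<inter> Q2 = {}"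
    and "x \<in> P - generated_subspace P L (Q1 \<union> Q2)"
  shows "dist L (proj1 L Q2 (proj1 L Q1 x)) (proj1 L Q2 x) = 1
       \<and> dist L (proj1 L Q1 (proj1 L Q2 x)) (proj1 L Q1 x) = 1
       \<and> dist L (proj1 L Q2 (proj1 L Q1 x)) (proj1 L Q1 (proj1 L Q2 x)) = 2
       \<and> dist L (proj1 L Q1 x) (proj1 L Q2 x) = 2"
proof -
  note NH = assms(1)
  have PL: "partial_linear_space P L" and C: "connected_geom P L" using nh_facts[OF NH] by auto
  define Y where "Y = generated_subspace P L (Q1 \<union> Q2)"
  have Q1: "quad P L Q1" and Q2: "quad P L Q2" using assms(4,5) by (auto simp: big_quad_def)
  have b1: "\<forall>p\<in>P. \<exists>q\<in>Q1. dist L p q \<le> 1" and b2: "\<forall>p\<in>P. \<exists>q\<in>Q2. dist L p q \<le> 1"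
    using assms(4,5) by (auto simp: big_quad_def)
  have Q1Y: "Q1 \<subseteq> Y" and Q2Y: "Q2 \<subseteq> Y" using gen_sup[of "Q1 \<union> Q2" P L] Y_def by auto
  have Ysub: "\<forall>l\<in>L. \<forall>a b. a \<in> l \<longrightarrow> b \<in> l \<longrightarrow> a \<noteq> b \<longrightarrow> a \<in> Y \<longrightarrow> b \<in> Y \<longrightarrow> l \<subseteq> Y"
    using gen_sub[OF PL] Y_def by blast
  have x: "x \<in> P" "x \<notin> Y" using assms(7) Y_def by auto
  have disj2: "Q2 \<inter> Q1 = {}" using assms(6) by auto
  note K1 = key[OF NH Q1 Q2 b1 b2 assms(6) Q1Y Q2Y Ysub x]
  note K2 = key[OF NH Q2 Q1 b2 b1 disj2 Q2Y Q1Y Ysub x]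
  define x1 where "x1 = proj1 L Q1 x"
  define x2 where "x2 = proj1 L Q2 x"
  define z1 where "z1 = proj1 L Q2 x1"
  define z2 where "z2 = proj1 L Q1 x2"
  have k1: "x1 \<in> Q1" "x2 \<in> Q2" "z1 \<in> Q2" "coll L z1 x1" "coll L z1 x2" "\<not> coll L x1 x2" "dist L x1 x2 = 2"
    using K1 unfolding x1_def x2_def z1_def by auto
  have k2: "z2 \<in> Q1" "coll L z2 x2" "coll L z2 x1"
    using K2 unfolding x1_def x2_def z2_def by auto
  have z1P: "z1 \<in> P" and z2P: "z2 \<in> P" using k1 k2 quad_P[OF Q1] quad_P[OF Q2] by auto
  have nez: "z1 \<noteq> z2" using k1 k2 assms(6) by auto
  have ne12: "x1 \<noteq> x2" using k1 assms(6) by auto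
  have ncz: "\<not> coll L z1 z2"
  proof
    assume "coll L z1 z2"
    then obtain l where l: "l \<in> L" "z1 \<in> l" "z2 \<in> l" using coll_ex_line by metis
    have "x1 \<in> l" using triangle[OF NH l nez coll_sym[OF k1(4)] coll_sym[OF k2(3)]] .
    moreover have "x2 \<in> l" using triangle[OF NH l nez coll_sym[OF k1(5)] coll_sym[OF k2(2)]] .
    ultimately show False using coll_line[OF l(1) _ _ ne12] k1(6) by auto
  qed
  have dz: "dist L z1 z2 = 2"
    using dist_cases2[OF C z1P z2P nez dist_le2[OF k1(4) coll_sym[OF k2(3)]]] ncz by auto
  show ?thesis
    using coll_dist[OF k1(5)] coll_dist[OF k2(3)] dz k1(7)
    unfolding x1_def x2_def z1_def z2_def by auto
qed

end
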